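(* For each $n\in\mathbb N$, let $\phi_n=(\phi_n(\theta),\theta\in\mathcal T)$ be a right-CE nonnegative supermartingale family, and suppose that the sequence $(\phi_n)$ is non-decreasing, i.e. for each $n$ and each $\theta\in\mathcal T$, $\phi_n(\theta)\le\phi_{n+1}(\theta)$ a.s. Then the family $\phi$ defined by $\phi(\theta)=\limsup_{n\to\infty}\phi_n(\theta)$, $\theta\in\mathcal T$, is a right-CE supermartingale family.
   Context: Filtered probability space $(\Omega,\mathcal F,(\mathcal F_t)_{0\le t\le T},P)$ satisfying the usual conditions, $\mathcal F=\mathcal F_T$, $\mathcal F_0$ trivial, $T\in(0,\infty)$. $\mathcal T$: stopping times valued in $[0,T]$. A family $\phi=(\phi(\theta),\theta\in\mathcal T)$ of $\overline{\mathbb R}$-valued random variables is admissible if each $\phi(\theta)$ is $\mathcal F_\theta$-measurable and $\phi(\theta)=\phi(\theta')$ a.s. on $\{\theta=\theta'\}$. An admissible $\phi$ with $E[\operatorname{ess\,sup}_\theta\phi(\theta)^-]<\infty$ is a supermartingale family if $E[\phi(\theta)\mid\mathcal F_{\theta'}]\le\phi(\theta')$ a.s. whenever $\theta\ge\theta'$ a.s. An admissible $\phi$ is right-CE if for all $\theta\in\mathcal T$ and all sequences $(\theta_n)\subset\mathcal T$ with $\theta_n\downarrow\theta$, $E[\phi(\theta)]=\lim_nE[\phi(\theta_n)]$. *)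

theory Defs
  imports "HOL-Probability.Probability"
begin

text \<open>Setting: probability space M, filtration F indexed by real time; only times in
  [0, Tm] are relevant (F is taken constant outside [0, Tm]).\<close>

definition usual_setting :: "'a measure \<Rightarrow> (real \<Rightarrow> 'a measure) \<Rightarrow> real \<Rightarrow> bool" where
  "usual_setting M F Tm \<longleftrightarrow>
     prob_space M \<and> 0 < Tm \<and>
     filtration (space M) F \<and>
     sets (F Tm) = sets M \<and>
     (\<forall>t. Tm \<le> t \<longrightarrow> sets (F t) = sets (F Tm)) \<and>
     (\<forall>t. t \<le> 0 \<longrightarrow> sets (F t) = sets (F 0)) \<and>
     (\<forall>t\<in>{0..<Tm}. sets (F t) = (\<Inter>s\<in>{t<..Tm}. sets (F s))) \<and>
     (\<forall>N A. N \<in> sets M \<longrightarrow> emeasure M N = 0 \<longrightarrow> A \<subseteq> N \<longrightarrow> A \<in> sets (F 0)) \<and>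
     (\<forall>A\<in>sets (F 0). emeasure M A = 0 \<or> emeasure M A = 1)"

definition stopT :: "'a measure \<Rightarrow> (real \<Rightarrow> 'a measure) \<Rightarrow> real \<Rightarrow> ('a \<Rightarrow> real) set" where
  "stopT M F Tm = {\<theta>. stopping_time F \<theta> \<and> (\<forall>\<omega>\<in>space M. \<theta> \<omega> \<in> {0..Tm})}"

abbreviation Fst :: "'a measure \<Rightarrow> (real \<Rightarrow> 'a measure) \<Rightarrow> ('a \<Rightarrow> real) \<Rightarrow> 'a measure" where
  "Fst M F \<theta> \<equiv> filtration.pre_sigma (space M) F \<theta>"

definition admissible ::
  "'a measure \<Rightarrow> (real \<Rightarrow> 'a measure) \<Rightarrow> real \<Rightarrow> (('a \<Rightarrow> real) \<Rightarrow> 'a \<Rightarrow> ennreal) \<Rightarrow> bool" where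
  "admissible M F Tm \<phi> \<longleftrightarrow>
     (\<forall>\<theta>\<in>stopT M F Tm. \<phi> \<theta> \<in> borel_measurable (Fst M F \<theta>)) \<and>
     (\<forall>\<theta>\<in>stopT M F Tm. \<forall>\<theta>'\<in>stopT M F Tm.
        AE \<omega> in M. \<theta> \<omega> = \<theta>' \<omega> \<longrightarrow> \<phi> \<theta> \<omega> = \<phi> \<theta>' \<omega>)"

text \<open>Supermartingale family (for nonnegative families the integrability condition
  E[ess sup \<phi>(\<theta>)^-] < \<infinity> holds trivially, and conditional expectation is nn_cond_exp).\<close>
definition supermart_family ::
  "'a measure \<Rightarrow> (real \<Rightarrow> 'a measure) \<Rightarrow> real \<Rightarrow> (('a \<Rightarrow> real) \<Rightarrow> 'a \<Rightarrow> ennreal) \<Rightarrow> bool" where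
  "supermart_family M F Tm \<phi> \<longleftrightarrow>
     admissible M F Tm \<phi> \<and>
     (\<forall>\<theta>\<in>stopT M F Tm. \<forall>\<theta>'\<in>stopT M F Tm.
        (AE \<omega> in M. \<theta>' \<omega> \<le> \<theta> \<omega>) \<longrightarrow>
        (AE \<omega> in M. nn_cond_exp M (Fst M F \<theta>') (\<phi> \<theta>) \<omega> \<le> \<phi> \<theta>' \<omega>))"

definition right_CE ::
  "'a measure \<Rightarrow> (real \<Rightarrow> 'a measure) \<Rightarrow> real \<Rightarrow> (('a \<Rightarrow> real) \<Rightarrow> 'a \<Rightarrow> ennreal) \<Rightarrow> bool" where
  "right_CE M F Tm \<phi> \<longleftrightarrow>
     admissible M F Tm \<phi> \<and>
     (\<forall>\<theta>\<in>stopT M F Tm. \<forall>\<theta>s. (\<forall>n. \<theta>s n \<in> stopT M F Tm) \<longrightarrow>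
        (\<forall>\<omega>\<in>space M. decseq (\<lambda>n. \<theta>s n \<omega>) \<and> (\<lambda>n. \<theta>s n \<omega>) \<longlonglongrightarrow> \<theta> \<omega>) \<longrightarrow>
        (\<lambda>n. \<integral>\<^sup>+ \<omega>. \<phi> (\<theta>s n) \<omega> \<partial>M) \<longlonglongrightarrow> (\<integral>\<^sup>+ \<omega>. \<phi> \<theta> \<omega> \<partial>M))"

end

theory Submission
  imports Defs
begin

lemma setting_sub:
  assumes S: "usual_setting M F Tm" and th: "\<theta> \<in> stopT M F Tm"
  shows "subalgebra M (Fst M F \<theta>)"
proof -
  have filt: "filtration (space M) F" and eq: "sets (F Tm) = sets M"
    using S unfolding usual_setting_def by auto
  interpret filtration "space M" F by (rule filt)
  have st: "stopping_time F \<theta>" and rng: "\<forall>\<omega>\<in>space M. \<theta> \<omega> \<in> {0..Tm}"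
    using th unfolding stopT_def by auto
  have "sets (pre_sigma \<theta>) \<subseteq> sets M"
  proof
    fix A assume A: "A \<in> sets (pre_sigma \<theta>)"
    then have "A \<subseteq> space M" using sets.sets_into_space[OF A] space_pre_sigma by simp
    then have "{\<omega>\<in>A. \<theta> \<omega> \<le> Tm} = A" using rng by auto
    moreover have "{\<omega>\<in>A. \<theta> \<omega> \<le> Tm} \<in> sets (F Tm)" using sets_pre_sigmaD[OF st A] .
    ultimately show "A \<in> sets M" using eq by simp
  qed
  then show ?thesis unfolding subalgebra_def using space_pre_sigma by simp
qed

lemma setting_sfs:
  assumes S: "usual_setting M F Tm" and th: "\<theta> \<in> stopT M F Tm"
  shows "sigma_finite_subalgebra M (Fst M F \<theta>)"
proof -
  have "prob_space M" using S unfolding usual_setting_def by auto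
  then have "finite_measure M" by (simp add: prob_space_def)
  then have "finite_measure_subalgebra M (Fst M F \<theta>)"
    using setting_sub[OF S th] by (simp add: finite_measure_subalgebra_def finite_measure_subalgebra_axioms_def)
  then show ?thesis by (rule finite_measure_subalgebra_is_sigma_finite)
qed

context sigma_finite_subalgebra begin
lemma nn_cond_exp_SUP:
  assumes [measurable]: "\<And>n. f n \<in> borel_measurable M"
    and inc: "\<And>n. AE x in M. f n x \<le> f (Suc n) x"
  shows "AE x in M. (SUP n. nn_cond_exp M F (f n) x) = nn_cond_exp M F (\<lambda>x. SUP n. f n x) x"
proof (rule nn_cond_exp_charact)
  fix A assume [measurable]: "A \<in> sets F"
  then have AM[measurable]: "A \<in> sets M" by (meson subalg subalgebra_def subsetD)
  have inc2: "\<And>n. AE x in M. nn_cond_exp M F (f n) x \<le> nn_cond_exp M F (f (Suc n)) x"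
    by (rule nn_cond_exp_mono) (auto simp: inc)
  have "(\<integral>\<^sup>+x\<in>A. (SUP n. f n x) \<partial>M) = (\<integral>\<^sup>+x. (SUP n. f n x * indicator A x) \<partial>M)"
    by (simp add: SUP_mult_right_ennreal)
  also have "\<dots> = (SUP n. \<integral>\<^sup>+x. f n x * indicator A x \<partial>M)"
  proof (rule nn_integral_monotone_convergence_SUP_AE)
    fix n show "AE x in M. f n x * indicator A x \<le> f (Suc n) x * indicator A x"
      using inc[of n] by eventually_elim (auto intro: mult_right_mono)
  qed auto
  also have "\<dots> = (SUP n. \<integral>\<^sup>+x. nn_cond_exp M F (f n) x * indicator A x \<partial>M)"
  proof (rule SUP_cong[OF refl])
    fix n
    have "(\<integral>\<^sup>+x. indicator A x * nn_cond_exp M F (f n) x \<partial>M) = (\<integral>\<^sup>+x. indicator A x * f n x \<partial>M)"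
      by (rule nn_cond_exp_intg) auto
    then show "(\<integral>\<^sup>+x. f n x * indicator A x \<partial>M) = (\<integral>\<^sup>+x. nn_cond_exp M F (f n) x * indicator A x \<partial>M)"
      by (simp add: mult.commute)
  qed
  also have "\<dots> = (\<integral>\<^sup>+x. (SUP n. nn_cond_exp M F (f n) x * indicator A x) \<partial>M)"
  proof (rule nn_integral_monotone_convergence_SUP_AE[symmetric])
    fix n show "AE x in M. nn_cond_exp M F (f n) x * indicator A x \<le> nn_cond_exp M F (f (Suc n)) x * indicator A x"
      using inc2[of n] by eventually_elim (auto intro: mult_right_mono)
  qed auto
  also have "\<dots> = (\<integral>\<^sup>+x\<in>A. (SUP n. nn_cond_exp M F (f n) x) \<partial>M)"
    by (simp add: SUP_mult_right_ennreal)
  finally show "(\<integral>\<^sup>+x\<in>A. (SUP n. f n x) \<partial>M) = (\<integral>\<^sup>+x\<in>A. (SUP n. nn_cond_exp M F (f n) x) \<partial>M)" .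
qed auto
end

theorem lemma3p6:
  fixes M :: "'a measure" and F :: "real \<Rightarrow> 'a measure" and Tm :: real
    and \<phi>s :: "nat \<Rightarrow> ('a \<Rightarrow> real) \<Rightarrow> 'a \<Rightarrow> ennreal"
  assumes setting: "usual_setting M F Tm"
    and rce: "\<And>n. right_CE M F Tm (\<phi>s n)"
    and sm: "\<And>n. supermart_family M F Tm (\<phi>s n)"
    and mono: "\<And>n \<theta>. \<theta> \<in> stopT M F Tm \<Longrightarrow> AE \<omega> in M. \<phi>s n \<theta> \<omega> \<le> \<phi>s (Suc n) \<theta> \<omega>"
  shows "right_CE M F Tm (\<lambda>\<theta> \<omega>. limsup (\<lambda>n. \<phi>s n \<theta> \<omega>))
       \<and> supermart_family M F Tm (\<lambda>\<theta> \<omega>. limsup (\<lambda>n. \<phi>s n \<theta> \<omega>))"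
proof -
  define \<Phi> where "\<Phi> = (\<lambda>\<theta> \<omega>. limsup (\<lambda>n. \<phi>s n \<theta> \<omega>))"
  have adm: "\<And>n. admissible M F Tm (\<phi>s n)" using sm unfolding supermart_family_def by auto
  have measF: "\<And>n \<theta>. \<theta> \<in> stopT M F Tm \<Longrightarrow> \<phi>s n \<theta> \<in> borel_measurable (Fst M F \<theta>)"
    using adm unfolding admissible_def by auto
  have measM[measurable]: "\<And>n \<theta>. \<theta> \<in> stopT M F Tm \<Longrightarrow> \<phi>s n \<theta> \<in> borel_measurable M"
    using measurable_from_subalg[OF setting_sub[OF setting] measF] by blast
  have measPhiF: "\<And>\<theta>. \<theta> \<in> stopT M F Tm \<Longrightarrow> \<Phi> \<theta> \<in> borel_measurable (Fst M F \<theta>)"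
    unfolding \<Phi>_def by (rule borel_measurable_limsup) (rule measF)
  have measPhiM: "\<And>\<theta>. \<theta> \<in> stopT M F Tm \<Longrightarrow> \<Phi> \<theta> \<in> borel_measurable M"
    using measurable_from_subalg[OF setting_sub[OF setting] measPhiF] by blast
  have AEsup: "\<And>\<theta>. \<theta> \<in> stopT M F Tm \<Longrightarrow> AE \<omega> in M. \<Phi> \<theta> \<omega> = (SUP n. \<phi>s n \<theta> \<omega>)"
  proof -
    fix \<theta> assume th: "\<theta> \<in> stopT M F Tm"
    have "AE \<omega> in M. \<forall>n. \<phi>s n \<theta> \<omega> \<le> \<phi>s (Suc n) \<theta> \<omega>"
      using mono[OF th] by (simp add: AE_all_countable)
    then show "AE \<omega> in M. \<Phi> \<theta> \<omega> = (SUP n. \<phi>s n \<theta> \<omega>)"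
    proof eventually_elim
      case (elim \<omega>)
      then have "incseq (\<lambda>n. \<phi>s n \<theta> \<omega>)" by (simp add: incseq_SucI)
      then have "(\<lambda>n. \<phi>s n \<theta> \<omega>) \<longlonglongrightarrow> (SUP n. \<phi>s n \<theta> \<omega>)" by (rule LIMSEQ_SUP)
      then show ?case unfolding \<Phi>_def by (intro lim_imp_Limsup) auto
    qed
  qed
  have intPhi: "\<And>\<theta>. \<theta> \<in> stopT M F Tm \<Longrightarrow> (\<integral>\<^sup>+\<omega>. \<Phi> \<theta> \<omega> \<partial>M) = (SUP n. \<integral>\<^sup>+\<omega>. \<phi>s n \<theta> \<omega> \<partial>M)"
  proof -
    fix \<theta> assume th: "\<theta> \<in> stopT M F Tm"
    have "(\<integral>\<^sup>+\<omega>. \<Phi> \<theta> \<omega> \<partial>M) = (\<integral>\<^sup>+\<omega>. (SUP n. \<phi>s n \<theta> \<omega>) \<partial>M)"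
      by (rule nn_integral_cong_AE[OF AEsup[OF th]])
    also have "\<dots> = (SUP n. \<integral>\<^sup>+\<omega>. \<phi>s n \<theta> \<omega> \<partial>M)"
      by (rule nn_integral_monotone_convergence_SUP_AE) (auto intro: mono[OF th] measM[OF th])
    finally show "(\<integral>\<^sup>+\<omega>. \<Phi> \<theta> \<omega> \<partial>M) = (SUP n. \<integral>\<^sup>+\<omega>. \<phi>s n \<theta> \<omega> \<partial>M)" .
  qed
  have expmono: "\<And>n \<theta> \<theta>'. \<theta> \<in> stopT M F Tm \<Longrightarrow> \<theta>' \<in> stopT M F Tm \<Longrightarrow> (\<forall>\<omega>\<in>space M. \<theta>' \<omega> \<le> \<theta> \<omega>)
      \<Longrightarrow> (\<integral>\<^sup>+\<omega>. \<phi>s n \<theta> \<omega> \<partial>M) \<le> (\<integral>\<^sup>+\<omega>. \<phi>s n \<theta>' \<omega> \<partial>M)"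
  proof -
    fix n \<theta> \<theta>' assume th: "\<theta> \<in> stopT M F Tm" and th': "\<theta>' \<in> stopT M F Tm"
      and le: "\<forall>\<omega>\<in>space M. \<theta>' \<omega> \<le> \<theta> \<omega>"
    interpret G: sigma_finite_subalgebra M "Fst M F \<theta>'" by (rule setting_sfs[OF setting th'])
    have "(\<integral>\<^sup>+\<omega>. \<phi>s n \<theta> \<omega> \<partial>M) = (\<integral>\<^sup>+\<omega>. 1 * \<phi>s n \<theta> \<omega> \<partial>M)" by simp
    also have "\<dots> = (\<integral>\<^sup>+\<omega>. 1 * nn_cond_exp M (Fst M F \<theta>') (\<phi>s n \<theta>) \<omega> \<partial>M)"
      by (rule G.nn_cond_exp_intg[symmetric]) (auto intro: measM[OF th])
    also have "\<dots> \<le> (\<integral>\<^sup>+\<omega>. \<phi>s n \<theta>' \<omega> \<partial>M)"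
    proof (rule nn_integral_mono_AE)
      have "AE \<omega> in M. \<theta>' \<omega> \<le> \<theta> \<omega>" using le by (intro AE_I2) auto
      then show "AE \<omega> in M. 1 * nn_cond_exp M (Fst M F \<theta>') (\<phi>s n \<theta>) \<omega> \<le> \<phi>s n \<theta>' \<omega>"
        using sm[of n] th th' unfolding supermart_family_def by auto
    qed
    finally show "(\<integral>\<^sup>+\<omega>. \<phi>s n \<theta> \<omega> \<partial>M) \<le> (\<integral>\<^sup>+\<omega>. \<phi>s n \<theta>' \<omega> \<partial>M)" .
  qed
  have admPhi: "admissible M F Tm \<Phi>"
    unfolding admissible_def
  proof (intro conjI ballI)
    fix \<theta> assume "\<theta> \<in> stopT M F Tm" then show "\<Phi> \<theta> \<in> borel_measurable (Fst M F \<theta>)" by (rule measPhiF)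
  next
    fix \<theta> \<theta>' assume th: "\<theta> \<in> stopT M F Tm" and th': "\<theta>' \<in> stopT M F Tm"
    have "AE \<omega> in M. \<forall>n. \<theta> \<omega> = \<theta>' \<omega> \<longrightarrow> \<phi>s n \<theta> \<omega> = \<phi>s n \<theta>' \<omega>"
      unfolding AE_all_countable using adm th th' unfolding admissible_def by auto
    then show "AE \<omega> in M. \<theta> \<omega> = \<theta>' \<omega> \<longrightarrow> \<Phi> \<theta> \<omega> = \<Phi> \<theta>' \<omega>"
      by eventually_elim (simp add: \<Phi>_def)
  qed
  have "right_CE M F Tm \<Phi>"
    unfolding right_CE_def
  proof (intro conjI admPhi ballI allI impI)
    fix \<theta> \<theta>s assume th: "\<theta> \<in> stopT M F Tm" and ths: "\<forall>n. \<theta>s n \<in> stopT M F Tm"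
      and dec: "\<forall>\<omega>\<in>space M. decseq (\<lambda>n. \<theta>s n \<omega>) \<and> (\<lambda>n. \<theta>s n \<omega>) \<longlonglongrightarrow> \<theta> \<omega>"
    define a where "a = (\<lambda>n k. \<integral>\<^sup>+\<omega>. \<phi>s n (\<theta>s k) \<omega> \<partial>M)"
    have inck: "\<And>n. incseq (a n)"
    proof (rule incseq_SucI)
      fix n k
      show "a n k \<le> a n (Suc k)" unfolding a_def
        by (rule expmono[OF ths[rule_format] ths[rule_format]])
           (use dec in \<open>auto simp: decseq_Suc_iff\<close>)
    qed
    have limn: "\<And>n. (\<integral>\<^sup>+\<omega>. \<phi>s n \<theta> \<omega> \<partial>M) = (SUP k. a n k)"
    proof -
      fix n
      have "a n \<longlonglongrightarrow> (\<integral>\<^sup>+\<omega>. \<phi>s n \<theta> \<omega> \<partial>M)"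
        using rce[of n] th ths dec unfolding right_CE_def a_def by blast
      moreover have "a n \<longlonglongrightarrow> (SUP k. a n k)" by (rule LIMSEQ_SUP[OF inck])
      ultimately show "(\<integral>\<^sup>+\<omega>. \<phi>s n \<theta> \<omega> \<partial>M) = (SUP k. a n k)" by (rule LIMSEQ_unique)
    qed
    have eqk: "\<And>k. (\<integral>\<^sup>+\<omega>. \<Phi> (\<theta>s k) \<omega> \<partial>M) = (SUP n. a n k)"
      unfolding a_def using intPhi ths by blast
    have "incseq (\<lambda>k. SUP n. a n k)"
      using inck unfolding incseq_def by (auto intro!: SUP_mono)
    then have "(\<lambda>k. SUP n. a n k) \<longlonglongrightarrow> (SUP k. SUP n. a n k)" by (rule LIMSEQ_SUP)
    moreover have "(SUP k. SUP n. a n k) = (\<integral>\<^sup>+\<omega>. \<Phi> \<theta> \<omega> \<partial>M)"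
      by (simp add: SUP_commute[of "\<lambda>k n. a n k"] limn intPhi[OF th])
    ultimately show "(\<lambda>n. \<integral>\<^sup>+\<omega>. \<Phi> (\<theta>s n) \<omega> \<partial>M) \<longlonglongrightarrow> (\<integral>\<^sup>+\<omega>. \<Phi> \<theta> \<omega> \<partial>M)"
      by (simp add: eqk)
  qed
  moreover have "supermart_family M F Tm \<Phi>"
    unfolding supermart_family_def
  proof (intro conjI admPhi ballI impI)
    fix \<theta> \<theta>' assume th: "\<theta> \<in> stopT M F Tm" and th': "\<theta>' \<in> stopT M F Tm"
      and le: "AE \<omega> in M. \<theta>' \<omega> \<le> \<theta> \<omega>"
    interpret G: sigma_finite_subalgebra M "Fst M F \<theta>'" by (rule setting_sfs[OF setting th'])
    have 1: "AE \<omega> in M. nn_cond_exp M (Fst M F \<theta>') (\<Phi> \<theta>) \<omega> = nn_cond_exp M (Fst M F \<theta>') (\<lambda>x. SUP n. \<phi>s n \<theta> x) \<omega>"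
      by (rule G.nn_cond_exp_cong[OF AEsup[OF th]]) (use measPhiM[OF th] measM[OF th] in auto)
    have 2: "AE \<omega> in M. (SUP n. nn_cond_exp M (Fst M F \<theta>') (\<phi>s n \<theta>) \<omega>) = nn_cond_exp M (Fst M F \<theta>') (\<lambda>x. SUP n. \<phi>s n \<theta> x) \<omega>"
      by (rule G.nn_cond_exp_SUP) (auto intro: measM[OF th] mono[OF th])
    have 3: "AE \<omega> in M. \<forall>n. nn_cond_exp M (Fst M F \<theta>') (\<phi>s n \<theta>) \<omega> \<le> \<phi>s n \<theta>' \<omega>"
      unfolding AE_all_countable using sm th th' le unfolding supermart_family_def by blast
    have 4: "AE \<omega> in M. \<Phi> \<theta>' \<omega> = (SUP n. \<phi>s n \<theta>' \<omega>)" by (rule AEsup[OF th'])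
    from 1 2 3 4 show "AE \<omega> in M. nn_cond_exp M (Fst M F \<theta>') (\<Phi> \<theta>) \<omega> \<le> \<Phi> \<theta>' \<omega>"
    proof eventually_elim
      case (elim \<omega>)
      have "(SUP n. nn_cond_exp M (Fst M F \<theta>') (\<phi>s n \<theta>) \<omega>) \<le> (SUP n. \<phi>s n \<theta>' \<omega>)"
        using elim(3) by (auto intro!: SUP_mono)
      then show ?case using elim(1,2,4) by simp
    qed
  qed
  ultimately show ?thesis unfolding \<Phi>_def by blast
qed

end
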